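(* Let $H=(V,E)$ be a $k$-uniform hypergraph and $U\subseteq V$ such that $|e\cap U|\leq2$ for all $e\in E$; let $f(e)=2$ if $|e\cap U|=2$ and $f(e)=1$ otherwise. Then for any $X\subseteq V\setminus U$, over the polynomial ring over $\mathrm{GF}(2^m)$ (any $m\geq1$) in the variables $\{v_e\}_{e\in E}$, $$W_{2,f}(H,U,X)=\sum_{i=0}^{|U|}Z\!\left(\frac{|V|}{k}-\left\lfloor\frac{|U|+i}{2}\right\rfloor\right)M_i,$$ where $M_i=\sum_{M\in\mathcal{M}_i}\prod_{e\in M}v_e^{p(e)}$, $\mathcal{M}_i$ being the set of perfect matchings containing exactly $i$ loops in the projected hypergraph on $U$ of $H$ restricted to the edges disjoint from $X$ (with $p(e)=1$ for loops and $p(e)=2$ otherwise), and $Z(j)=\sum_{E'\subseteq Z,\,|E'|=j}\prod_{e'\in E'}v_{e'}$, with $Z$ the set of edges $e\in E$ satisfying $e\cap X=\emptyset$ and $e\cap U=\emptyset$ (so $Z(j)=0$ if $j<0$).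
   Context: A hypergraph $H=(V,E)$ has a finite vertex set $V$ and a multiset $E$ of subsets of $V$; $k$-uniform means all edges have size $k$. Subsets of $E$ treat multiset occurrences as distinct. Each $e\in E$ has a variable $v_e$. For $U\subseteq V$ the projected hypergraph has one edge $e\cap U$ per $e\in E$; $e$ is a loop if $|e\cap U|=1$. A perfect matching of the projected hypergraph (of a set of edges) is a subset $M$ of those edges whose projections on $U$ are nonempty, pairwise disjoint and cover $U$. $W_{2,f}(H,U,X)=\sum_{E''}\prod_{e\in E''}v_e^{f(e)}$, the sum over all $E''\subseteq E$ with: $e\cap X=\emptyset$ for all $e\in E''$; $|E''|=|V|/k$; $U\subseteq\bigcup_{e\in E''}e$; and $e_1\cap e_2\cap U=\emptyset$ for all distinct $e_1,e_2\in E''$. *)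

theory Defs
  imports Complex_Main
begin

text \<open>A hypergraph with a finite vertex set V and a multiset of edges is represented
by a finite index set E of edge names together with a map ed giving the vertex set
of each edge (so repeated edges are distinct indices).\<close>

definition W2f :: "('e \<Rightarrow> 'a set) \<Rightarrow> 'e set \<Rightarrow> 'a set \<Rightarrow> nat \<Rightarrow> 'a set \<Rightarrow> 'a set
    \<Rightarrow> ('e \<Rightarrow> nat) \<Rightarrow> ('e \<Rightarrow> 'r::comm_ring_1) \<Rightarrow> 'r" where
  "W2f ed E V k U X f v =
     (\<Sum>E'' \<in> {E''. E'' \<subseteq> E
                  \<and> (\<forall>e\<in>E''. ed e \<inter> X = {})
                  \<and> real (card E'') = real (card V) / real k
                  \<and> U \<subseteq> (\<Union>e\<in>E''. ed e)
                  \<and> (\<forall>e1\<in>E''. \<forall>e2\<in>E''. e1 \<noteq> e2 \<longrightarrow> ed e1 \<inter> ed e2 \<inter> U = {})}.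
        \<Prod>e\<in>E''. v e ^ f e)"

definition perfect_matching_proj :: "('e \<Rightarrow> 'a set) \<Rightarrow> 'e set \<Rightarrow> 'a set \<Rightarrow> 'e set \<Rightarrow> bool" where
  "perfect_matching_proj ed F U M \<longleftrightarrow>
     M \<subseteq> F
     \<and> (\<forall>e\<in>M. ed e \<inter> U \<noteq> {})
     \<and> (\<forall>e1\<in>M. \<forall>e2\<in>M. e1 \<noteq> e2 \<longrightarrow> ed e1 \<inter> ed e2 \<inter> U = {})
     \<and> U \<subseteq> (\<Union>e\<in>M. ed e \<inter> U)"

definition num_loops :: "('e \<Rightarrow> 'a set) \<Rightarrow> 'a set \<Rightarrow> 'e set \<Rightarrow> nat" where
  "num_loops ed U M = card {e\<in>M. card (ed e \<inter> U) = 1}"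

definition Mpoly :: "('e \<Rightarrow> 'a set) \<Rightarrow> 'e set \<Rightarrow> 'a set \<Rightarrow> 'a set \<Rightarrow> ('e \<Rightarrow> 'r::comm_ring_1)
    \<Rightarrow> nat \<Rightarrow> 'r" where
  "Mpoly ed E U X v i =
     (\<Sum>M \<in> {M. perfect_matching_proj ed {e\<in>E. ed e \<inter> X = {}} U M \<and> num_loops ed U M = i}.
        \<Prod>e\<in>M. v e ^ (if card (ed e \<inter> U) = 1 then 1 else 2))"

text \<open>Z(j) for a real argument j: sum over subsets of the edges disjoint from X and U
of size j (zero if j is negative or not an integer).\<close>
definition Zpoly :: "('e \<Rightarrow> 'a set) \<Rightarrow> 'e set \<Rightarrow> 'a set \<Rightarrow> 'a set \<Rightarrow> ('e \<Rightarrow> 'r::comm_ring_1)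
    \<Rightarrow> real \<Rightarrow> 'r" where
  "Zpoly ed E U X v j =
     (\<Sum>E' \<in> {E'. E' \<subseteq> {e\<in>E. ed e \<inter> X = {} \<and> ed e \<inter> U = {}} \<and> real (card E') = j}.
        \<Prod>e\<in>E'. v e)"

end

theory Submission
  imports Defs
begin

lemma pm_card:
  assumes fin: "finite U" and fM: "finite M"
    and le2: "\<forall>e\<in>M. card (ed e \<inter> U) \<le> 2"
    and pm: "perfect_matching_proj ed F U M"
  shows "card U + num_loops ed U M = 2 * card M"
proof -
  have ne: "\<forall>e\<in>M. ed e \<inter> U \<noteq> {}" and dis: "\<forall>e1\<in>M. \<forall>e2\<in>M. e1 \<noteq> e2 \<longrightarrow> ed e1 \<inter> ed e2 \<inter> U = {}"
    and cov: "U \<subseteq> (\<Union>e\<in>M. ed e \<inter> U)" using pm unfolding perfect_matching_proj_def by auto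
  have U: "U = (\<Union>e\<in>M. ed e \<inter> U)" using cov by auto
  have "card U = (\<Sum>e\<in>M. card (ed e \<inter> U))"
    by (subst U, rule card_UN_disjoint) (use fM fin dis in auto)
  also have "\<dots> = (\<Sum>e\<in>M. if card (ed e \<inter> U) = 1 then 1 else 2)"
  proof (rule sum.cong)
    fix e assume "e \<in> M"
    hence "card (ed e \<inter> U) \<noteq> 0" "card (ed e \<inter> U) \<le> 2" using ne le2 fin by auto
    thus "card (ed e \<inter> U) = (if card (ed e \<inter> U) = 1 then 1 else 2)" by auto
  qed simp
  also have "\<dots> = (\<Sum>e\<in>M. 2 - (if card (ed e \<inter> U) = 1 then 1 else 0::nat))"
    by (rule sum.cong) auto
  finally have "card U + num_loops ed U M = (\<Sum>e\<in>M. 2 - (if card (ed e \<inter> U) = 1 then 1 else 0::nat))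
      + (\<Sum>e\<in>M. (if card (ed e \<inter> U) = 1 then 1 else 0::nat))"
    unfolding num_loops_def using fM by (simp add: sum.If_cases Int_def)
  also have "\<dots> = (\<Sum>e\<in>M. (2 - (if card (ed e \<inter> U) = 1 then 1 else 0::nat)) + (if card (ed e \<inter> U) = 1 then 1 else 0::nat))"
    by (rule sum.distrib[symmetric])
  also have "\<dots> = (\<Sum>e\<in>M. 2::nat)" by (rule sum.cong) auto
  also have "\<dots> = 2 * card M" by simp
  finally show ?thesis .
qed

theorem lemma4p3:
  fixes ed :: "'e \<Rightarrow> 'a set" and E :: "'e set" and V U X :: "'a set" and k :: nat
    and v :: "'e \<Rightarrow> 'r::comm_ring_1"
  assumes "finite V" and "finite E"
    and "\<forall>e\<in>E. ed e \<subseteq> V \<and> card (ed e) = k"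
    and "U \<subseteq> V"
    and "\<forall>e\<in>E. card (ed e \<inter> U) \<le> 2"
    and "X \<subseteq> V - U"
    and "(2::'r) = 0"
  shows "W2f ed E V k U X (\<lambda>e. if card (ed e \<inter> U) = 2 then 2 else 1) v =
         (\<Sum>i=0..card U.
            Zpoly ed E U X v (real (card V) / real k - real ((card U + i) div 2))
            * Mpoly ed E U X v i)"
proof -
  define F where "F = {e\<in>E. ed e \<inter> X = {}}"
  define PM where "PM = {M. perfect_matching_proj ed F U M}"
  define Zs where "Zs = {e\<in>E. ed e \<inter> X = {} \<and> ed e \<inter> U = {}}"
  define N where "N = real (card V) / real k"
  define g where "g M = (\<Prod>e\<in>M. v e ^ (if card (ed e \<inter> U) = 1 then 1 else 2))" for M
  define h where "h E' = prod v E'" for E'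
  define ZZ where "ZZ M = {E'. E' \<subseteq> Zs \<and> real (card E') = N - real (card M)}" for M :: "'e set"
  define f where "f e = (if card (ed e \<inter> U) = 2 then 2 else 1::nat)" for e
  define S where "S = {E''. E'' \<subseteq> E \<and> (\<forall>e\<in>E''. ed e \<inter> X = {})
                  \<and> real (card E'') = real (card V) / real k
                  \<and> U \<subseteq> (\<Union>e\<in>E''. ed e)
                  \<and> (\<forall>e1\<in>E''. \<forall>e2\<in>E''. e1 \<noteq> e2 \<longrightarrow> ed e1 \<inter> ed e2 \<inter> U = {})}"
  have finU: "finite U" using assms(1,4) finite_subset by auto
  have FE: "F \<subseteq> E" unfolding F_def by auto
  have finPM: "finite PM"
  proof (rule finite_subset[of _ "Pow E"])
    show "PM \<subseteq> Pow E" using FE unfolding PM_def perfect_matching_proj_def by auto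
  qed (use assms(2) in simp)
  have PMsub: "M \<subseteq> E" if "M \<in> PM" for M
    using that FE unfolding PM_def perfect_matching_proj_def by auto
  have PMfin: "finite M" if "M \<in> PM" for M
    using finite_subset[OF PMsub[OF that] assms(2)] .
  have PMcard: "card U + num_loops ed U M = 2 * card M" if "M \<in> PM" for M
  proof (rule pm_card[OF finU PMfin[OF that], of ed F])
    show "\<forall>e\<in>M. card (ed e \<inter> U) \<le> 2" using PMsub[OF that] assms(5) by auto
    show "perfect_matching_proj ed F U M" using that unfolding PM_def by simp
  qed
  have finZZ: "finite (ZZ M)" for M
  proof (rule finite_subset[of _ "Pow Zs"])
    show "ZZ M \<subseteq> Pow Zs" unfolding ZZ_def by auto
    show "finite (Pow Zs)" unfolding Zs_def using assms(2) by simp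
  qed
  have Mne: "ed e \<inter> U \<noteq> {}" if "M \<in> PM" "e \<in> M" for M e
    using that unfolding PM_def perfect_matching_proj_def by auto
  have Zemp: "ed e \<inter> U = {}" if "E' \<in> ZZ M" "e \<in> E'" for M E' e
    using that unfolding ZZ_def Zs_def by auto
  have ZZfin: "finite E'" if "E' \<in> ZZ M" for M E'
  proof (rule finite_subset[of _ E])
    show "E' \<subseteq> E" using that unfolding ZZ_def Zs_def by auto
  qed (rule assms(2))
  have cardun: "card (M \<union> E') = card M + card E'" if "M \<in> PM" "E' \<in> ZZ M" for M E'
  proof (rule card_Un_disjoint)
    show "finite M" by (rule PMfin[OF that(1)])
    show "finite E'" by (rule ZZfin[OF that(2)])
    show "M \<inter> E' = {}" using Mne[OF that(1)] Zemp[OF that(2)] by blast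
  qed
  have "(\<Sum>i=0..card U. Zpoly ed E U X v (N - real ((card U + i) div 2)) * Mpoly ed E U X v i)
     = (\<Sum>i=0..card U. \<Sum>M\<in>{M\<in>PM. num_loops ed U M = i}. \<Sum>E'\<in>ZZ M. h E' * g M)"
  proof (rule sum.cong[OF refl])
    fix i
    have "Zpoly ed E U X v (N - real ((card U + i) div 2)) * Mpoly ed E U X v i
      = (\<Sum>M\<in>{M\<in>PM. num_loops ed U M = i}. Zpoly ed E U X v (N - real ((card U + i) div 2)) * g M)"
      unfolding Mpoly_def sum_distrib_left PM_def F_def g_def by simp
    also have "\<dots> = (\<Sum>M\<in>{M\<in>PM. num_loops ed U M = i}. \<Sum>E'\<in>ZZ M. h E' * g M)"
    proof (rule sum.cong[OF refl])
      fix M assume M: "M \<in> {M\<in>PM. num_loops ed U M = i}"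
      hence "(card U + i) div 2 = card M" using PMcard[of M] by auto
      thus "Zpoly ed E U X v (N - real ((card U + i) div 2)) * g M = (\<Sum>E'\<in>ZZ M. h E' * g M)"
        unfolding Zpoly_def sum_distrib_right ZZ_def Zs_def h_def by simp
    qed
    finally show "Zpoly ed E U X v (N - real ((card U + i) div 2)) * Mpoly ed E U X v i
      = (\<Sum>M\<in>{M\<in>PM. num_loops ed U M = i}. \<Sum>E'\<in>ZZ M. h E' * g M)" .
  qed
  also have "\<dots> = (\<Sum>M\<in>PM. \<Sum>E'\<in>ZZ M. h E' * g M)"
  proof (rule sum.group[OF finPM])
    show "finite {0..card U}" by simp
    show "num_loops ed U ` PM \<subseteq> {0..card U}"
    proof
      fix y assume "y \<in> num_loops ed U ` PM"
      then obtain M where M: "M \<in> PM" "y = num_loops ed U M" by auto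
      have "num_loops ed U M \<le> card M" unfolding num_loops_def
        by (rule card_mono[OF PMfin[OF M(1)]]) auto
      thus "y \<in> {0..card U}" using PMcard[OF M(1)] M(2) by simp
    qed
  qed
  also have "\<dots> = (\<Sum>p\<in>Sigma PM ZZ. h (snd p) * g (fst p))"
    by (subst sum.Sigma) (use finPM finZZ in \<open>auto simp: case_prod_beta\<close>)
  also have "\<dots> = (\<Sum>E''\<in>S. \<Prod>e\<in>E''. v e ^ f e)"
  proof (rule sum.reindex_bij_witness[of _ "\<lambda>E''. ({e\<in>E''. ed e \<inter> U \<noteq> {}}, {e\<in>E''. ed e \<inter> U = {}})" "\<lambda>p. fst p \<union> snd p"])
    fix ab assume ab: "ab \<in> Sigma PM ZZ"
    then obtain M E' where abe: "ab = (M, E')" and M: "M \<in> PM" and E': "E' \<in> ZZ M" by auto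
    have "{e \<in> M \<union> E'. ed e \<inter> U \<noteq> {}} = M" using Mne[OF M] Zemp[OF E'] by blast
    moreover have "{e \<in> M \<union> E'. ed e \<inter> U = {}} = E'" using Mne[OF M] Zemp[OF E'] by blast
    ultimately show "({e \<in> fst ab \<union> snd ab. ed e \<inter> U \<noteq> {}}, {e \<in> fst ab \<union> snd ab. ed e \<inter> U = {}}) = ab"
      using abe by simp
    have pm: "perfect_matching_proj ed F U M" using M unfolding PM_def by simp
    have E'Zs: "E' \<subseteq> Zs" and cE': "real (card E') = N - real (card M)" using E' unfolding ZZ_def by auto
    show "fst ab \<union> snd ab \<in> S"
      unfolding S_def abe fst_conv snd_conv
    proof (intro CollectI conjI)
      show "M \<union> E' \<subseteq> E" using PMsub[OF M] E'Zs unfolding Zs_def by auto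
      show "\<forall>e\<in>M \<union> E'. ed e \<inter> X = {}" using pm E'Zs unfolding Zs_def F_def perfect_matching_proj_def by auto
      show "real (card (M \<union> E')) = real (card V) / real k"
        using cardun[OF M E'] cE' unfolding N_def by simp
      show "U \<subseteq> (\<Union>e\<in>M \<union> E'. ed e)" using pm unfolding perfect_matching_proj_def by blast
      show "\<forall>e1\<in>M \<union> E'. \<forall>e2\<in>M \<union> E'. e1 \<noteq> e2 \<longrightarrow> ed e1 \<inter> ed e2 \<inter> U = {}"
        using pm Zemp[OF E'] unfolding perfect_matching_proj_def by blast
    qed
    have "(\<Prod>e\<in>M \<union> E'. v e ^ f e) = (\<Prod>e\<in>M. v e ^ f e) * (\<Prod>e\<in>E'. v e ^ f e)"
      by (rule prod.union_disjoint) (use PMfin[OF M] ZZfin[OF E'] Mne[OF M] Zemp[OF E'] in auto)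
    also have "(\<Prod>e\<in>M. v e ^ f e) = g M" unfolding g_def
    proof (rule prod.cong[OF refl])
      fix e assume e: "e \<in> M"
      have "card (ed e \<inter> U) \<noteq> 0" using Mne[OF M e] finU by auto
      moreover have "card (ed e \<inter> U) \<le> 2" using PMsub[OF M] e assms(5) by auto
      ultimately show "v e ^ f e = v e ^ (if card (ed e \<inter> U) = 1 then 1 else 2)"
        unfolding f_def by (cases "card (ed e \<inter> U)") auto
    qed
    also have "(\<Prod>e\<in>E'. v e ^ f e) = h E'" unfolding h_def
      by (rule prod.cong[OF refl]) (use Zemp[OF E'] in \<open>auto simp: f_def\<close>)
    finally show "(\<Prod>e\<in>fst ab \<union> snd ab. v e ^ f e) = h (snd ab) * g (fst ab)"
      using abe by (simp add: mult.commute)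
  next
    fix E'' assume E'': "E'' \<in> S"
    show "fst ({e\<in>E''. ed e \<inter> U \<noteq> {}}, {e\<in>E''. ed e \<inter> U = {}}) \<union> snd ({e\<in>E''. ed e \<inter> U \<noteq> {}}, {e\<in>E''. ed e \<inter> U = {}}) = E''"
      by auto
    define M where "M = {e\<in>E''. ed e \<inter> U \<noteq> {}}"
    define E' where "E' = {e\<in>E''. ed e \<inter> U = {}}"
    have sub: "E'' \<subseteq> E" and avX: "\<forall>e\<in>E''. ed e \<inter> X = {}"
      and cE: "real (card E'') = N" and cov: "U \<subseteq> (\<Union>e\<in>E''. ed e)"
      and dis: "\<forall>e1\<in>E''. \<forall>e2\<in>E''. e1 \<noteq> e2 \<longrightarrow> ed e1 \<inter> ed e2 \<inter> U = {}"
      using E'' unfolding S_def N_def by auto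
    have finE'': "finite E''" using finite_subset[OF sub assms(2)] .
    have MPM: "M \<in> PM" unfolding PM_def perfect_matching_proj_def
    proof (intro CollectI conjI)
      show "M \<subseteq> F" using sub avX unfolding M_def F_def by auto
      show "\<forall>e\<in>M. ed e \<inter> U \<noteq> {}" unfolding M_def by auto
      show "\<forall>e1\<in>M. \<forall>e2\<in>M. e1 \<noteq> e2 \<longrightarrow> ed e1 \<inter> ed e2 \<inter> U = {}" using dis unfolding M_def by auto
      show "U \<subseteq> (\<Union>e\<in>M. ed e \<inter> U)"
      proof
        fix x assume x: "x \<in> U"
        then obtain e where "e \<in> E''" "x \<in> ed e" using cov by auto
        thus "x \<in> (\<Union>e\<in>M. ed e \<inter> U)" using x unfolding M_def by auto
      qed
    qed
    have "card E'' = card M + card E'"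
    proof -
      have "E'' = M \<union> E'" unfolding M_def E'_def by auto
      moreover have "card (M \<union> E') = card M + card E'"
        by (rule card_Un_disjoint) (use finE'' in \<open>auto simp: M_def E'_def\<close>)
      ultimately show ?thesis by simp
    qed
    hence "real (card E') = N - real (card M)" using cE by simp
    moreover have "E' \<subseteq> Zs" using sub avX unfolding E'_def Zs_def by auto
    ultimately have "E' \<in> ZZ M" unfolding ZZ_def by simp
    with MPM show "({e\<in>E''. ed e \<inter> U \<noteq> {}}, {e\<in>E''. ed e \<inter> U = {}}) \<in> Sigma PM ZZ"
      unfolding M_def E'_def by simp
  qed
  finally show ?thesis unfolding W2f_def S_def N_def f_def by simp
qed

end
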